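(* Let $G$ be a symmetric two-player game with action space $\mathcal{A}=\mathbb{R}$ and payoff function $u$ satisfying Assumptions (A1) and (A2) below, and let $\epsilon_R>0$. On the strategy space $\mathcal{S}=\mathcal{B}\cup\mathcal{R}$ with the penalized fitness $f(\sigma,\sigma')=u\big(r(\sigma,\sigma'),r(\sigma',\sigma)\big)-\epsilon_R\,\mathbb{I}[\sigma\in\mathcal{R}]$, the strategy $B(\mathrm{NE}(0,0))$ is the unique Nash equilibrium, and it is an evolutionarily stable strategy.
   Context: Base game: a symmetric two-player game $G$ with action set $\mathcal{A}=\mathbb{R}$; $u(x,y)$ denotes the payoff of a player who plays $x$ when the opponent plays $y$. Subjective utilities: for $\alpha\in\mathbb{R}$, $V^{\alpha}(x,y)=u(x,y)+\alpha\,u(y,x)$. For $\alpha_i,\alpha_j\in\mathbb{R}$, $G(\alpha_i,\alpha_j)$ is the game with the same actions in which player $i$ has payoff $V^{\alpha_i}$ and player $j$ has payoff $V^{\alpha_j}$. $\mathrm{NE}(\alpha_i,\alpha_j)$ denotes the action of the player with parameter $\alpha_i$ in the Nash equilibrium of $G(\alpha_i,\alpha_j)$ (the opponent plays $\mathrm{NE}(\alpha_j,\alpha_i)$). $\mathrm{BR}(b;\alpha)$ is the maximizer of $a\mapsto V^{\alpha}(a,b)$. Assumptions: (A1) for all $\alpha_i,\alpha_j$, $G(\alpha_i,\alpha_j)$ has a unique (pure) Nash equilibrium; (A2) for all $b,\alpha$, $a\mapsto V^{\alpha}(a,b)$ has a unique global maximum $\mathrm{BR}(b;\alpha)$. Strategies: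 $\mathcal{B}=\{B(a):a\in\mathcal{A}\}$ and $\mathcal{R}=\{R(\alpha):\alpha\in\mathbb{R}\}$, with actions $r(B(a),\sigma')=a$ for all $\sigma'$; $r(R(\alpha),B(b))=\mathrm{BR}(b;\alpha)$; $r(R(\alpha),R(\alpha'))=\mathrm{NE}(\alpha,\alpha')$. $\mathbb{I}[\cdot]$ is the indicator function. Stability notions relative to a strategy space $\Sigma$ and fitness $f$: $\sigma$ is a Nash equilibrium if $f(\sigma,\sigma)\ge f(\sigma',\sigma)$ for all $\sigma'\in\Sigma$; a neutrally stable strategy if it is a Nash equilibrium and for every $\sigma'$ with $f(\sigma',\sigma)=f(\sigma,\sigma)$ one has $f(\sigma,\sigma')\ge f(\sigma',\sigma')$; an evolutionarily stable strategy if moreover this inequality is strict for every such $\sigma'\neq\sigma$. *)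

theory Defs
  imports Main "HOL.Real"
begin

type_synonym payoff = "real \<Rightarrow> real \<Rightarrow> real"

definition V :: "payoff \<Rightarrow> real \<Rightarrow> real \<Rightarrow> real \<Rightarrow> real" where
  "V u \<alpha> x y = u x y + \<alpha> * u y x"

definition is_NE_pair :: "payoff \<Rightarrow> real \<Rightarrow> real \<Rightarrow> real \<Rightarrow> real \<Rightarrow> bool" where
  "is_NE_pair u \<alpha>i \<alpha>j x y \<longleftrightarrow>
     (\<forall>x'. V u \<alpha>i x' y \<le> V u \<alpha>i x y) \<and> (\<forall>y'. V u \<alpha>j y' x \<le> V u \<alpha>j y x)"

definition A1 :: "payoff \<Rightarrow> bool" where
  "A1 u \<longleftrightarrow> (\<forall>\<alpha>i \<alpha>j. \<exists>!p. is_NE_pair u \<alpha>i \<alpha>j (fst p) (snd p))"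

definition A2 :: "payoff \<Rightarrow> bool" where
  "A2 u \<longleftrightarrow> (\<forall>b \<alpha>. \<exists>!a. \<forall>a'. V u \<alpha> a' b \<le> V u \<alpha> a b)"

definition NE :: "payoff \<Rightarrow> real \<Rightarrow> real \<Rightarrow> real" where
  "NE u \<alpha>i \<alpha>j = fst (THE p. is_NE_pair u \<alpha>i \<alpha>j (fst p) (snd p))"

definition BR :: "payoff \<Rightarrow> real \<Rightarrow> real \<Rightarrow> real" where
  "BR u b \<alpha> = (THE a. \<forall>a'. V u \<alpha> a' b \<le> V u \<alpha> a b)"

text \<open>Strategies: B(a) (fixed action) and R(alpha) (rational with preference alpha).\<close>
datatype strat = B real | R real

fun act :: "payoff \<Rightarrow> strat \<Rightarrow> strat \<Rightarrow> real" where
  "act u (B a) s = a"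
| "act u (R \<alpha>) (B b) = BR u b \<alpha>"
| "act u (R \<alpha>) (R \<alpha>') = NE u \<alpha> \<alpha>'"

fun is_R :: "strat \<Rightarrow> bool" where
  "is_R (B a) = False"
| "is_R (R \<alpha>) = True"

definition fit :: "payoff \<Rightarrow> real \<Rightarrow> strat \<Rightarrow> strat \<Rightarrow> real" where
  "fit u \<epsilon> s s' = u (act u s s') (act u s' s) - \<epsilon> * (if is_R s then 1 else 0)"

definition nash_strat :: "'s set \<Rightarrow> ('s \<Rightarrow> 's \<Rightarrow> real) \<Rightarrow> 's \<Rightarrow> bool" where
  "nash_strat \<Sigma> f \<sigma> \<longleftrightarrow> \<sigma> \<in> \<Sigma> \<and> (\<forall>\<sigma>'\<in>\<Sigma>. f \<sigma> \<sigma> \<ge> f \<sigma>' \<sigma>)"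

definition ESS :: "'s set \<Rightarrow> ('s \<Rightarrow> 's \<Rightarrow> real) \<Rightarrow> 's \<Rightarrow> bool" where
  "ESS \<Sigma> f \<sigma> \<longleftrightarrow> nash_strat \<Sigma> f \<sigma> \<and>
     (\<forall>\<sigma>'\<in>\<Sigma>. f \<sigma>' \<sigma> = f \<sigma> \<sigma> \<longrightarrow> f \<sigma> \<sigma>' \<ge> f \<sigma>' \<sigma>') \<and>
     (\<forall>\<sigma>'\<in>\<Sigma>. \<sigma>' \<noteq> \<sigma> \<longrightarrow> f \<sigma>' \<sigma> = f \<sigma> \<sigma> \<longrightarrow> f \<sigma> \<sigma>' > f \<sigma>' \<sigma>')"

end

theory Submission
  imports Defs
begin

lemma NE_sym:
  assumes "A1 u"
  shows "is_NE_pair u \<alpha> \<alpha> (NE u \<alpha> \<alpha>) (NE u \<alpha> \<alpha>)"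
proof -
  define p where "p = (THE p. is_NE_pair u \<alpha> \<alpha> (fst p) (snd p))"
  have ex: "\<exists>!p. is_NE_pair u \<alpha> \<alpha> (fst p) (snd p)" using assms unfolding A1_def by blast
  have P: "is_NE_pair u \<alpha> \<alpha> (fst p) (snd p)" unfolding p_def by (rule theI'[OF ex])
  have P2: "is_NE_pair u \<alpha> \<alpha> (fst (snd p, fst p)) (snd (snd p, fst p))"
    using P unfolding is_NE_pair_def by auto
  have "(snd p, fst p) = p" using ex P P2 by blast
  hence "fst p = snd p" by (metis fst_conv snd_conv)
  thus ?thesis using P unfolding NE_def p_def[symmetric] by simp
qed

lemma BR_spec:
  assumes "A2 u"
  shows "V u \<alpha> a' b \<le> V u \<alpha> (BR u b \<alpha>) b"
proof -
  have ex: "\<exists>!a. \<forall>a'. V u \<alpha> a' b \<le> V u \<alpha> a b" using assms unfolding A2_def by blast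
  show ?thesis using theI'[OF ex] unfolding BR_def by blast
qed

lemma BR_eq:
  assumes "A2 u" and "\<forall>a'. V u \<alpha> a' b \<le> V u \<alpha> a b"
  shows "BR u b \<alpha> = a"
proof -
  have ex: "\<exists>!a. \<forall>a'. V u \<alpha> a' b \<le> V u \<alpha> a b" using assms unfolding A2_def by blast
  show ?thesis unfolding BR_def using ex assms(2) by (rule the1_equality)
qed

lemma V0: "V u 0 x y = u x y" by (simp add: V_def)

theorem proposition2:
  fixes u :: payoff and \<epsilon>R :: real
  assumes "A1 u" and "A2 u" and "\<epsilon>R > 0"
  shows "(\<forall>\<sigma>. nash_strat UNIV (fit u \<epsilon>R) \<sigma> \<longleftrightarrow> \<sigma> = B (NE u 0 0))
         \<and> ESS UNIV (fit u \<epsilon>R) (B (NE u 0 0))"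
proof -
  define a where "a = NE u 0 0"
  have NEa: "is_NE_pair u 0 0 a a" using NE_sym[OF assms(1)] a_def by simp
  have amax: "\<And>x. u x a \<le> u a a" using NEa unfolding is_NE_pair_def V_def by simp
  have auniq: "\<And>x. u x a = u a a \<Longrightarrow> x = a"
  proof -
    fix x assume h: "u x a = u a a"
    have "\<forall>a'. V u 0 a' a \<le> V u 0 x a" using amax h by (simp add: V0)
    hence "BR u a 0 = x" using BR_eq[OF assms(2)] by blast
    moreover have "\<forall>a'. V u 0 a' a \<le> V u 0 a a" using amax by (simp add: V0)
    hence "BR u a 0 = a" using BR_eq[OF assms(2)] by blast
    ultimately show "x = a" by simp
  qed
  have dev: "\<And>s. fit u \<epsilon>R s (B a) \<le> fit u \<epsilon>R (B a) (B a) \<and>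
        (fit u \<epsilon>R s (B a) = fit u \<epsilon>R (B a) (B a) \<longrightarrow> s = B a)"
  proof -
    fix s show "fit u \<epsilon>R s (B a) \<le> fit u \<epsilon>R (B a) (B a) \<and>
        (fit u \<epsilon>R s (B a) = fit u \<epsilon>R (B a) (B a) \<longrightarrow> s = B a)"
    proof (cases s)
      case (B x) thus ?thesis using amax[of x] auniq[of x] by (simp add: fit_def)
    next
      case (R \<alpha>)
      thus ?thesis using amax[of "BR u a \<alpha>"] assms(3) by (simp add: fit_def)
    qed
  qed
  have nashB: "nash_strat UNIV (fit u \<epsilon>R) (B a)" unfolding nash_strat_def using dev by auto
  have ess: "ESS UNIV (fit u \<epsilon>R) (B a)" unfolding ESS_def using nashB dev by auto
  have uniq: "\<And>s. nash_strat UNIV (fit u \<epsilon>R) s \<Longrightarrow> s = B a"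
  proof -
    fix s assume ns: "nash_strat UNIV (fit u \<epsilon>R) s"
    show "s = B a"
    proof (cases s)
      case (B b)
      have "\<And>x. u x b \<le> u b b"
      proof -
        fix x
        have "fit u \<epsilon>R (B x) (B b) \<le> fit u \<epsilon>R (B b) (B b)" using ns B unfolding nash_strat_def by blast
        thus "u x b \<le> u b b" by (simp add: fit_def)
      qed
      hence "is_NE_pair u 0 0 (fst (b,b)) (snd (b,b))" unfolding is_NE_pair_def by (simp add: V0)
      moreover have "is_NE_pair u 0 0 (fst (a,a)) (snd (a,a))" using NEa by simp
      moreover have "\<exists>!p. is_NE_pair u 0 0 (fst p) (snd p)" using assms(1) unfolding A1_def by blast
      ultimately have "(b,b) = (a,a)" by blast
      thus ?thesis using B by simp
    next
      case (R \<alpha>)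
      define c where "c = NE u \<alpha> \<alpha>"
      have NEc: "is_NE_pair u \<alpha> \<alpha> c c" using NE_sym[OF assms(1)] c_def by simp
      hence "\<forall>a'. V u \<alpha> a' c \<le> V u \<alpha> c c" unfolding is_NE_pair_def by blast
      hence br: "BR u c \<alpha> = c" using BR_eq[OF assms(2)] by blast
      have "fit u \<epsilon>R (B c) (R \<alpha>) \<le> fit u \<epsilon>R (R \<alpha>) (R \<alpha>)" using ns R unfolding nash_strat_def by blast
      hence False using br assms(3) by (simp add: fit_def c_def)
      thus ?thesis ..
    qed
  qed
  show ?thesis using nashB ess uniq a_def by blast
qed

end
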